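(* There is $q_0$ such that the following holds for every prime power $q\ge q_0$. Let $n=q^2$, and let $k,s$ be positive integers with $(ks)^{3/2}<\frac{n^{1/4}}{32\ln n}$. Then there exists a binary (i.e. over $\mathbb{F}_2$) $\bigl(n,N,k,2\lceil \sqrt n/s\rceil\bigr)$-BAC with $$N\le n+64(ks)^{3/2}n^{3/4}\ln n.$$
   Context: $[n]=\{1,\dots,n\}$. An $(n,N,k,m)$-batch array code (BAC) over $\mathbb{F}_2$ is an $\mathbb{F}_2$-linear map $\mathcal{C}:\mathbf x=(x_1,\dots,x_n)\in\mathbb{F}_2^n\mapsto(\mathbf c_1,\dots,\mathbf c_m)$ with buckets $\mathbf c_\ell\in\mathbb{F}_2^{N_\ell}$, $N_\ell\ge1$ independent of $\mathbf x$, $\sum_\ell N_\ell=N$, such that for every multiset $\{\{i_1,\dots,i_k\}\}$ of elements of $[n]$ there is a partition of $[m]$ into $k$ sets $R_1,\dots,R_k$ such that for each $j\in[k]$, $x_{i_j}$ is an $\mathbb{F}_2$-linear combination of values $f_\ell(\mathbf c_\ell)$, $\ell\in R_j$, for some linear functionals $f_\ell:\mathbb{F}_2^{N_\ell}\to\mathbb{F}_2$ (independent of $\mathbf x$). *)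

theory Defs
  imports "HOL-Analysis.Analysis" "HOL-Library.Z2" "HOL-Number_Theory.Prime_Powers"
begin

text \<open>Vectors in F_2^n are functions nat => bit, only coordinates 0..<n matter.
  An F_2-linear map x |-> (c_0,...,c_{m-1}) with bucket c_l in F_2^{Nb l} is given by its
  matrix G: coordinate t of bucket l is  sum_{i<n} G l t i * x i.\<close>

definition bucket_val :: "nat \<Rightarrow> (nat \<Rightarrow> nat \<Rightarrow> nat \<Rightarrow> bit) \<Rightarrow> nat \<Rightarrow> (nat \<Rightarrow> bit) \<Rightarrow> nat \<Rightarrow> bit" where
  "bucket_val n G l x t = (\<Sum>i<n. G l t i * x i)"

definition functional_val :: "(nat \<Rightarrow> nat) \<Rightarrow> (nat \<Rightarrow> nat \<Rightarrow> bit) \<Rightarrow> nat \<Rightarrow> (nat \<Rightarrow> bit) \<Rightarrow> bit" where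
  "functional_val Nb a l c = (\<Sum>t<Nb l. a l t * c t)"

text \<open>(n,N,k,m)-batch array code over F_2 with data indices [n] = {..<n} and buckets {..<m}.
  A multiset {{i_1,...,i_k}} of elements of [n] is given by a map j |-> i j on {..<k};
  R j (j<k) is a partition of {..<m} into k sets.\<close>

definition is_BAC :: "nat \<Rightarrow> nat \<Rightarrow> nat \<Rightarrow> nat \<Rightarrow> bool" where
  "is_BAC n N k m \<longleftrightarrow>
    (\<exists>(Nb :: nat \<Rightarrow> nat) (G :: nat \<Rightarrow> nat \<Rightarrow> nat \<Rightarrow> bit).
       (\<forall>l<m. Nb l \<ge> 1) \<and> (\<Sum>l<m. Nb l) = N \<and>
       (\<forall>idx :: nat \<Rightarrow> nat. (\<forall>j<k. idx j < n) \<longrightarrow>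
          (\<exists>R :: nat \<Rightarrow> nat set.
             (\<Union>j<k. R j) = {..<m} \<and>
             (\<forall>j1<k. \<forall>j2<k. j1 \<noteq> j2 \<longrightarrow> R j1 \<inter> R j2 = {}) \<and>
             (\<forall>j<k. \<exists>(a :: nat \<Rightarrow> nat \<Rightarrow> bit) (lam :: nat \<Rightarrow> bit).
                \<forall>x :: nat \<Rightarrow> bit.
                  x (idx j) = (\<Sum>l\<in>R j. lam l * functional_val Nb a l (bucket_val n G l x))))))"

end

theory Submission
  imports Defs "HOL-Number_Theory.Cong"
begin


lemma mod_add_cancel_unique:
  fixes a b c M :: nat
  assumes "a < M" "b < M" "(c + a) mod M = (c + b) mod M"
  shows "a = b"
proof -
  have "[c + a = c + b] (mod M)" using assms(3) by (simp add: cong_def)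
  hence "[a = b] (mod M)" by (simp add: cong_add_lcancel_nat)
  thus ?thesis using assms(1,2) by (simp add: cong_def)
qed

lemma card_PiE_determined:
  fixes I :: "'a set" and F :: "'a \<Rightarrow> 'b set"
  assumes fin: "finite I" and i: "i \<in> I" and i0: "i0 \<in> I" and ne: "i \<noteq> i0"
    and finF: "\<And>x. finite (F x)"
    and uniq: "\<And>x w1 w2. w1 \<in> C x \<Longrightarrow> w2 \<in> C x \<Longrightarrow> w1 = w2"
  shows "card {v \<in> PiE I F. v i \<in> C (v i0)} \<le> card (PiE (I - {i}) F)"
proof (rule card_inj_on_le[where f = "\<lambda>v. restrict v (I - {i})"])
  show "(\<lambda>v. restrict v (I - {i})) ` {v \<in> PiE I F. v i \<in> C (v i0)} \<subseteq> PiE (I - {i}) F"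
    by (auto simp: PiE_def Pi_def)
  show "finite (PiE (I - {i}) F)" using fin finF by (simp add: finite_PiE)
  show "inj_on (\<lambda>v. restrict v (I - {i})) {v \<in> PiE I F. v i \<in> C (v i0)}"
  proof (rule inj_onI)
    fix v v' assume v: "v \<in> {v \<in> PiE I F. v i \<in> C (v i0)}" and v': "v' \<in> {v \<in> PiE I F. v i \<in> C (v i0)}"
      and eq: "restrict v (I - {i}) = restrict v' (I - {i})"
    have e1: "\<And>x. x \<in> I - {i} \<Longrightarrow> v x = v' x" using eq by (metis restrict_apply')
    have "v i0 = v' i0" using e1 i0 ne by auto
    hence "v i = v' i" using v v' uniq by auto
    show "v = v'"
    proof
      fix x show "v x = v' x"
        using e1 \<open>v i = v' i\<close> v v' by (cases "x \<in> I") (auto simp: PiE_def extensional_def)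
    qed
  qed
qed

definition condk :: "nat \<Rightarrow> nat \<Rightarrow> nat \<Rightarrow> nat \<Rightarrow> nat \<Rightarrow> (nat \<Rightarrow> nat) \<Rightarrow> (nat \<Rightarrow> nat) \<Rightarrow> bool" where
  "condk M L i0 y0 j0 u v \<longleftrightarrow> (\<exists>i<L. i \<noteq> i0 \<and> (\<exists>y<M. (y + v i) mod M = (y0 + v i0) mod M \<and> (y + u i) mod M = j0))"

lemma card_row_bad:
  fixes M L i0 y0 j0 :: nat and u :: "nat \<Rightarrow> nat"
  assumes i0: "i0 < L"
  shows "card {v \<in> PiE {..<L} (\<lambda>_. {..<M}). condk M L i0 y0 j0 u v} \<le> (L - 1) * M ^ (L - 1)"
proof -
  let ?W = "PiE {..<L} (\<lambda>_. {..<M}::nat set)"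
  define C where "C i x = {w. \<exists>y<M. (y + u i) mod M = j0 \<and> w < M \<and> (y + w) mod M = (y0 + x) mod M}" for i x
  have sub: "{v \<in> ?W. condk M L i0 y0 j0 u v} \<subseteq> (\<Union>i\<in>{..<L} - {i0}. {v \<in> ?W. v i \<in> C i (v i0)})"
  proof
    fix v assume "v \<in> {v \<in> ?W. condk M L i0 y0 j0 u v}"
    then obtain i y where vW: "v \<in> ?W" and i: "i < L" "i \<noteq> i0" and y: "y < M" "(y + v i) mod M = (y0 + v i0) mod M" "(y + u i) mod M = j0"
      unfolding condk_def by blast
    have "v i < M" using vW i by auto
    hence "v i \<in> C i (v i0)" unfolding C_def using y by auto
    thus "v \<in> (\<Union>i\<in>{..<L} - {i0}. {v \<in> ?W. v i \<in> C i (v i0)})" using vW i by auto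
  qed
  have each: "card {v \<in> ?W. v i \<in> C i (v i0)} \<le> M ^ (L - 1)" if i: "i \<in> {..<L} - {i0}" for i
  proof -
    have "card {v \<in> ?W. v i \<in> C i (v i0)} \<le> card (PiE ({..<L} - {i}) (\<lambda>_. {..<M}::nat set))"
    proof (rule card_PiE_determined)
      show "finite {..<L}" by simp
      show "i \<in> {..<L}" "i0 \<in> {..<L}" "i \<noteq> i0" using i i0 by auto
      show "\<And>x. finite ({..<M}::nat set)" by simp
      fix x w1 w2 assume w1: "w1 \<in> C i x" and w2: "w2 \<in> C i x"
      then obtain y1 y2 where a: "y1 < M" "(y1 + u i) mod M = j0" "w1 < M" "(y1 + w1) mod M = (y0 + x) mod M"
        and b: "y2 < M" "(y2 + u i) mod M = j0" "w2 < M" "(y2 + w2) mod M = (y0 + x) mod M"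
        unfolding C_def by blast
      have "y1 = y2" using mod_add_cancel_unique[of y1 M y2 "u i"] a b by (simp add: add.commute)
      thus "w1 = w2" using mod_add_cancel_unique[of w1 M w2 y1] a b by simp
    qed
    also have "\<dots> = M ^ (L - 1)" using i by (simp add: card_PiE)
    finally show ?thesis .
  qed
  have "card {v \<in> ?W. condk M L i0 y0 j0 u v} \<le> card (\<Union>i\<in>{..<L} - {i0}. {v \<in> ?W. v i \<in> C i (v i0)})"
    by (rule card_mono) (auto intro!: finite_PiE sub[unfolded subset_eq] simp: sub)
  also have "\<dots> \<le> (\<Sum>i\<in>{..<L} - {i0}. card {v \<in> ?W. v i \<in> C i (v i0)})" by (rule card_UN_le) simp
  also have "\<dots> \<le> (\<Sum>i\<in>{..<L} - {i0}. M ^ (L - 1))" by (rule sum_mono) (rule each)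
  also have "\<dots> = (L - 1) * M ^ (L - 1)" using i0 by simp
  finally show ?thesis .
qed


lemma card_bad:
  fixes M L D r i0 y0 j0 f :: nat and G :: "nat set"
  assumes f: "f < D" and G: "G \<subseteq> {..<D} - {f}" and cG: "card G = r" and i0: "i0 < L"
  shows "card {a \<in> PiE {..<D} (\<lambda>_. PiE {..<L} (\<lambda>_. {..<M})). \<forall>g\<in>G. condk M L i0 y0 j0 (a f) (a g)} * M ^ r
         \<le> (L - 1) ^ r * (M ^ L) ^ D"
proof -
  let ?W = "PiE {..<L} (\<lambda>_. {..<M}::nat set)"
  define A where "A u = {v \<in> ?W. condk M L i0 y0 j0 u v}" for u
  define F where "F u g = (if g = f then {u} else if g \<in> G then A u else ?W)" for u g
  have cW: "card ?W = M ^ L" by (simp add: card_PiE)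
  have cA: "card (A u) \<le> (L - 1) * M ^ (L - 1)" for u unfolding A_def by (rule card_row_bad[OF i0])
  have finW: "finite ?W" by (simp add: finite_PiE)
  have sub: "{a \<in> PiE {..<D} (\<lambda>_. ?W). \<forall>g\<in>G. condk M L i0 y0 j0 (a f) (a g)} \<subseteq> (\<Union>u\<in>?W. PiE {..<D} (F u))"
  proof
    fix a assume a: "a \<in> {a \<in> PiE {..<D} (\<lambda>_. ?W). \<forall>g\<in>G. condk M L i0 y0 j0 (a f) (a g)}"
    have "a f \<in> ?W" using a f by auto
    moreover have "a \<in> PiE {..<D} (F (a f))"
      using a G unfolding F_def A_def by (auto simp: PiE_def Pi_def)
    ultimately show "a \<in> (\<Union>u\<in>?W. PiE {..<D} (F u))" by blast
  qed
  have finF: "finite (F u g)" for u g unfolding F_def A_def using finW by auto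
  have cF: "card (PiE {..<D} (F u)) \<le> (\<Prod>g<D. (if g = f then 1 else if g \<in> G then (L - 1) * M ^ (L - 1) else M ^ L))" for u
  proof -
    have "card (PiE {..<D} (F u)) = (\<Prod>g<D. card (F u g))" by (simp add: card_PiE)
    also have "\<dots> \<le> (\<Prod>g<D. (if g = f then 1 else if g \<in> G then (L - 1) * M ^ (L - 1) else M ^ L))"
      by (rule prod_mono) (use cA cW in \<open>auto simp: F_def simp del: One_nat_def\<close>)
    finally show ?thesis .
  qed
  define P where "P = (\<Prod>g<D. (if g = f then 1 else if g \<in> G then (L - 1) * M ^ (L - 1) else M ^ L::nat))"
  have finG: "finite G" using G finite_subset by blast
  have rD: "r + 1 \<le> D"
  proof -
    have "card G \<le> card ({..<D} - {f})" using G by (intro card_mono) auto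
    thus ?thesis using cG f by simp
  qed
  have P_eq: "P = ((L - 1) * M ^ (L - 1)) ^ r * (M ^ L) ^ (D - r - 1)"
  proof -
    have "P = (\<Prod>g\<in>G. (if g = f then 1 else if g \<in> G then (L - 1) * M ^ (L - 1) else M ^ L::nat)) *
              (\<Prod>g\<in>{..<D} - G. (if g = f then 1 else if g \<in> G then (L - 1) * M ^ (L - 1) else M ^ L::nat))"
      unfolding P_def using G by (subst prod.subset_diff[of G]) (auto simp: mult.commute)
    also have "(\<Prod>g\<in>G. (if g = f then 1 else if g \<in> G then (L - 1) * M ^ (L - 1) else M ^ L::nat)) = ((L - 1) * M ^ (L - 1)) ^ r"
      using G cG by (subst prod.cong[where B = G and h = "\<lambda>_. (L - 1) * M ^ (L - 1)"]) auto
    also have "(\<Prod>g\<in>{..<D} - G. (if g = f then 1 else if g \<in> G then (L - 1) * M ^ (L - 1) else M ^ L::nat))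
              = (\<Prod>g\<in>{..<D} - G - {f}. M ^ L)"
    proof -
      have "{..<D} - G = insert f ({..<D} - G - {f})" using f G by auto
      hence "(\<Prod>g\<in>{..<D} - G. (if g = f then 1 else if g \<in> G then (L - 1) * M ^ (L - 1) else M ^ L::nat))
          = (\<Prod>g\<in>insert f ({..<D} - G - {f}). (if g = f then 1 else if g \<in> G then (L - 1) * M ^ (L - 1) else M ^ L::nat))" by simp
      also have "\<dots> = (\<Prod>g\<in>{..<D} - G - {f}. (if g = f then 1 else if g \<in> G then (L - 1) * M ^ (L - 1) else M ^ L::nat))"
        by (subst prod.insert) auto
      also have "\<dots> = (\<Prod>g\<in>{..<D} - G - {f}. M ^ L)" by (rule prod.cong) auto
      finally show ?thesis .
    qed
    also have "(\<Prod>g\<in>{..<D} - G - {f}. M ^ L) = (M ^ L) ^ (D - r - 1)"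
    proof -
      have "card ({..<D} - G - {f}) = D - r - 1"
      proof -
        have "card ({..<D} - G) = D - r" using G cG finG by (subst card_Diff_subset) auto
        moreover have "f \<in> {..<D} - G" using f G by auto
        ultimately show ?thesis by (simp add: card_Diff_singleton)
      qed
      thus ?thesis by simp
    qed
    finally show ?thesis .
  qed
  have "card {a \<in> PiE {..<D} (\<lambda>_. ?W). \<forall>g\<in>G. condk M L i0 y0 j0 (a f) (a g)} \<le> card (\<Union>u\<in>?W. PiE {..<D} (F u))"
    using sub finW finF by (intro card_mono) (auto intro!: finite_PiE)
  also have "\<dots> \<le> (\<Sum>u\<in>?W. card (PiE {..<D} (F u)))" by (rule card_UN_le[OF finW])
  also have "\<dots> \<le> (\<Sum>u\<in>?W. P)" unfolding P_def by (rule sum_mono) (rule cF)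
  also have "\<dots> = M ^ L * P" using cW by simp
  finally have le: "card {a \<in> PiE {..<D} (\<lambda>_. ?W). \<forall>g\<in>G. condk M L i0 y0 j0 (a f) (a g)} \<le> M ^ L * P" .
  have "M ^ L * P * M ^ r = (L - 1) ^ r * (M ^ L) ^ D"
  proof (cases "L = 0")
    case True thus ?thesis using i0 by simp
  next
    case False
    have "M ^ L * P * M ^ r = (L - 1) ^ r * (M ^ L * (M ^ (L - 1) * M) ^ r * (M ^ L) ^ (D - r - 1))"
    proof -
      have h1: "((L - 1) * M ^ (L - 1)) ^ r = (L - 1) ^ r * (M ^ (L - 1)) ^ r" by (rule power_mult_distrib)
      have h2: "(M ^ (L - 1) * M) ^ r = (M ^ (L - 1)) ^ r * M ^ r" by (rule power_mult_distrib)
      show ?thesis unfolding P_eq h1 h2 by (simp only: mult.assoc mult.commute mult.left_commute)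
    qed
    also have "M ^ (L - 1) * M = M ^ L" using False by (metis neq0_conv power_minus_mult)
    also have "M ^ L * (M ^ L) ^ r * (M ^ L) ^ (D - r - 1) = (M ^ L) ^ (1 + r + (D - r - 1))"
      by (simp only: power_add power_one_right)
    also have "1 + r + (D - r - 1) = D" using rD by simp
    finally show ?thesis .
  qed
  moreover have "card {a \<in> PiE {..<D} (\<lambda>_. ?W). \<forall>g\<in>G. condk M L i0 y0 j0 (a f) (a g)} * M ^ r \<le> M ^ L * P * M ^ r"
    by (rule mult_le_mono1[OF le])
  ultimately show ?thesis by simp
qed


lemma exists_good:
  fixes D M L r :: nat
  assumes hyp: "D * M * L * M * (D choose r) * (L - 1) ^ r < M ^ r" and r: "r \<ge> 1"
  shows "\<exists>a \<in> PiE {..<D} (\<lambda>_. PiE {..<L} (\<lambda>_. {..<M})). \<forall>f<D. \<forall>j0<M. \<forall>i0<L. \<forall>y0<M. \<forall>G.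
            G \<subseteq> {..<D} - {f} \<and> card G = r \<longrightarrow> \<not> (\<forall>g\<in>G. condk M L i0 y0 j0 (a f) (a g))"
proof (rule ccontr)
  let ?W = "PiE {..<L} (\<lambda>_. {..<M}::nat set)"
  let ?O = "PiE {..<D} (\<lambda>_. ?W)"
  define Cs where "Cs = {..<D} \<times> {..<M} \<times> {..<L} \<times> {..<M} \<times> {G. G \<subseteq> {..<D} \<and> card G = r}"
  define Bad where "Bad c = (case c of (f, j0, i0, y0, G) \<Rightarrow>
      {a \<in> ?O. G \<subseteq> {..<D} - {f} \<and> (\<forall>g\<in>G. condk M L i0 y0 j0 (a f) (a g))})" for c
  assume neg: "\<not> ?thesis"
  have cov: "?O \<subseteq> (\<Union>c\<in>Cs. Bad c)"
  proof
    fix a assume aO: "a \<in> ?O"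
    with neg obtain f j0 i0 y0 G where
      h: "f < D" "j0 < M" "i0 < L" "y0 < M" "G \<subseteq> {..<D} - {f}" "card G = r" "\<forall>g\<in>G. condk M L i0 y0 j0 (a f) (a g)"
      by blast
    have "(f, j0, i0, y0, G) \<in> Cs" unfolding Cs_def using h by auto
    moreover have "a \<in> Bad (f, j0, i0, y0, G)" unfolding Bad_def using h aO by simp
    ultimately show "a \<in> (\<Union>c\<in>Cs. Bad c)" by blast
  qed
  have M0: "M > 0"
  proof (rule ccontr)
    assume "\<not> M > 0" hence "M = 0" by simp
    thus False using hyp r by (simp add: power_0_left)
  qed
  have cO: "card ?O = (M ^ L) ^ D" by (simp add: card_PiE)
  have finO: "finite ?O" by (auto intro!: finite_PiE)
  have finCs: "finite Cs" unfolding Cs_def by (auto intro!: finite_cartesian_product)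
  have cCs: "card Cs = D * M * L * M * (D choose r)"
    unfolding Cs_def by (simp add: card_cartesian_product n_subsets)
  have cB: "card (Bad c) * M ^ r \<le> (L - 1) ^ r * (M ^ L) ^ D" if c: "c \<in> Cs" for c
  proof -
    obtain f j0 i0 y0 G where ceq: "c = (f, j0, i0, y0, G)" by (cases c) auto
    have fi: "f < D" "i0 < L" "card G = r" using c ceq unfolding Cs_def by auto
    show ?thesis
    proof (cases "G \<subseteq> {..<D} - {f}")
      case True
      have "Bad c = {a \<in> ?O. \<forall>g\<in>G. condk M L i0 y0 j0 (a f) (a g)}" unfolding Bad_def ceq using True by auto
      thus ?thesis using card_bad[OF fi(1) True fi(3) fi(2)] by simp
    next
      case False
      hence "Bad c = {}" unfolding Bad_def ceq by auto
      thus ?thesis by simp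
    qed
  qed
  have subO: "(\<Union>c\<in>Cs. Bad c) \<subseteq> ?O" unfolding Bad_def by (auto split: prod.splits)
  have "card ?O \<le> card (\<Union>c\<in>Cs. Bad c)"
    by (rule card_mono[OF finite_subset[OF subO finO] cov])
  also have "\<dots> \<le> (\<Sum>c\<in>Cs. card (Bad c))" by (rule card_UN_le[OF finCs])
  finally have "card ?O * M ^ r \<le> (\<Sum>c\<in>Cs. card (Bad c)) * M ^ r" by (rule mult_le_mono1)
  also have "\<dots> = (\<Sum>c\<in>Cs. card (Bad c) * M ^ r)" by (simp add: sum_distrib_right)
  also have "\<dots> \<le> (\<Sum>c\<in>Cs. (L - 1) ^ r * (M ^ L) ^ D)" by (rule sum_mono) (rule cB)
  also have "\<dots> = (D * M * L * M * (D choose r) * (L - 1) ^ r) * (M ^ L) ^ D" using cCs by simp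
  also have "\<dots> < M ^ r * (M ^ L) ^ D" using hyp M0 by simp
  finally show False using cO by simp
qed



definition resc :: "(nat \<Rightarrow> nat) \<Rightarrow> nat \<Rightarrow> bool" where
  "resc p j \<longleftrightarrow> (\<exists>i<j. p i = p j)"

definition ginv :: "(nat \<Rightarrow> nat \<Rightarrow> nat set) \<Rightarrow> nat \<Rightarrow> nat \<Rightarrow> (nat \<Rightarrow> nat) \<Rightarrow> nat \<Rightarrow> (nat \<Rightarrow> nat) \<Rightarrow> bool" where
  "ginv B D k p n \<phi> \<longleftrightarrow> (\<forall>j<n. resc p j \<longrightarrow> \<phi> j < D \<and> (B (\<phi> j) (p j) - {p j}) \<inter> p ` {..<k} = {}) \<and>
     (\<forall>j<n. \<forall>j'<n. j \<noteq> j' \<longrightarrow> resc p j \<longrightarrow> resc p j' \<longrightarrow>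
        \<phi> j \<noteq> \<phi> j' \<and> (B (\<phi> j) (p j) - {p j}) \<inter> (B (\<phi> j') (p j') - {p j'}) = {})"

lemma card_insert_le1: "finite S \<Longrightarrow> card (insert x S) \<le> card S + 1"
  by (simp add: card_insert_if)

lemma greedy:
  fixes B :: "nat \<Rightarrow> nat \<Rightarrow> nat set" and p :: "nat \<Rightarrow> nat" and D T k \<kappa> :: nat
  assumes Bp: "\<And>g b. g < D \<Longrightarrow> b < T \<Longrightarrow> b \<in> B g b"
    and kill: "\<And>f b b'. f < D \<Longrightarrow> b < T \<Longrightarrow> b' < T \<Longrightarrow>
        card {g. g < D \<and> g \<noteq> f \<and> (B g b - {b}) \<inter> B f b' \<noteq> {}} \<le> \<kappa>"
    and Dk: "(k - 1) * (2 * \<kappa> + 3) < D"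
    and pts: "\<And>j. j < k \<Longrightarrow> p j < T"
  shows "\<exists>\<phi>. ginv B D k p k \<phi>"
proof -
  have D0: "0 < D" using Dk by simp
  have "n \<le> k \<Longrightarrow> \<exists>\<phi>. ginv B D k p n \<phi>" for n
  proof (induction n)
    case 0 show ?case unfolding ginv_def by simp
  next
    case (Suc n)
    then obtain \<phi> where inv: "ginv B D k p n \<phi>" by auto
    have nk: "n < k" using Suc.prems by simp
    show ?case
    proof (cases "resc p n")
      case False
      have "ginv B D k p (Suc n) \<phi>"
        using inv False unfolding ginv_def by (auto simp: less_Suc_eq)
      thus ?thesis by blast
    next
      case True
      define J where "J = {j. j < n \<and> resc p j}"
      define Q where "Q = p ` {..<k} - {p n}"
      define F1 where "F1 = \<phi> ` J"
      define F2 where "F2 = (\<Union>z\<in>Q. insert 0 {g. g < D \<and> g \<noteq> 0 \<and> (B g (p n) - {p n}) \<inter> B 0 z \<noteq> {}})"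
      define F3 where "F3 = (\<Union>j\<in>J. insert (\<phi> j) {g. g < D \<and> g \<noteq> \<phi> j \<and> (B g (p n) - {p n}) \<inter> B (\<phi> j) (p j) \<noteq> {}})"
      have finJ: "finite J" unfolding J_def by simp
      have cJ: "card J \<le> k - 1"
      proof -
        have "card J \<le> card {..<n}" unfolding J_def by (rule card_mono) auto
        thus ?thesis using nk by simp
      qed
      have finQ: "finite Q" unfolding Q_def by simp
      have cQ: "card Q \<le> k - 1"
      proof -
        have "card (p ` {..<k}) \<le> k" using card_image_le[of "{..<k}" p] by simp
        moreover have "p n \<in> p ` {..<k}" using nk by simp
        ultimately show ?thesis unfolding Q_def by (simp add: card_Diff_singleton)
      qed
      have c1: "card F1 \<le> k - 1" unfolding F1_def using card_image_le[OF finJ, of \<phi>] cJ by simp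
      have c2: "card F2 \<le> (k - 1) * (\<kappa> + 1)"
      proof -
        have "card F2 \<le> (\<Sum>z\<in>Q. card (insert 0 {g. g < D \<and> g \<noteq> 0 \<and> (B g (p n) - {p n}) \<inter> B 0 z \<noteq> {}}))"
          unfolding F2_def by (rule card_UN_le[OF finQ])
        also have "\<dots> \<le> (\<Sum>z\<in>Q. \<kappa> + 1)"
        proof (rule sum_mono)
          fix z assume z: "z \<in> Q"
          have zT: "z < T" using z pts unfolding Q_def by auto
          have "card (insert 0 {g. g < D \<and> g \<noteq> 0 \<and> (B g (p n) - {p n}) \<inter> B 0 z \<noteq> {}})
                \<le> card {g. g < D \<and> g \<noteq> 0 \<and> (B g (p n) - {p n}) \<inter> B 0 z \<noteq> {}} + 1"
            by (rule card_insert_le1) simp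
          also have "\<dots> \<le> \<kappa> + 1" using kill[OF D0 pts[OF nk] zT] by simp
          finally show "card (insert 0 {g. g < D \<and> g \<noteq> 0 \<and> (B g (p n) - {p n}) \<inter> B 0 z \<noteq> {}}) \<le> \<kappa> + 1" .
        qed
        also have "\<dots> = card Q * (\<kappa> + 1)" by simp
        also have "\<dots> \<le> (k - 1) * (\<kappa> + 1)" using cQ by (intro mult_le_mono1)
        finally show ?thesis .
      qed
      have c3: "card F3 \<le> (k - 1) * (\<kappa> + 1)"
      proof -
        have "card F3 \<le> (\<Sum>j\<in>J. card (insert (\<phi> j) {g. g < D \<and> g \<noteq> \<phi> j \<and> (B g (p n) - {p n}) \<inter> B (\<phi> j) (p j) \<noteq> {}}))"
          unfolding F3_def by (rule card_UN_le[OF finJ])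
        also have "\<dots> \<le> (\<Sum>j\<in>J. \<kappa> + 1)"
        proof (rule sum_mono)
          fix j assume j: "j \<in> J"
          have jn: "j < n" "resc p j" using j unfolding J_def by auto
          have fj: "\<phi> j < D" using inv jn unfolding ginv_def by auto
          have pj: "p j < T" using pts jn nk by simp
          have "card (insert (\<phi> j) {g. g < D \<and> g \<noteq> \<phi> j \<and> (B g (p n) - {p n}) \<inter> B (\<phi> j) (p j) \<noteq> {}})
                \<le> card {g. g < D \<and> g \<noteq> \<phi> j \<and> (B g (p n) - {p n}) \<inter> B (\<phi> j) (p j) \<noteq> {}} + 1"
            by (rule card_insert_le1) simp
          also have "\<dots> \<le> \<kappa> + 1" using kill[OF fj pts[OF nk] pj] by simp
          finally show "card (insert (\<phi> j) {g. g < D \<and> g \<noteq> \<phi> j \<and> (B g (p n) - {p n}) \<inter> B (\<phi> j) (p j) \<noteq> {}}) \<le> \<kappa> + 1" .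
        qed
        also have "\<dots> = card J * (\<kappa> + 1)" by simp
        also have "\<dots> \<le> (k - 1) * (\<kappa> + 1)" using cJ by (intro mult_le_mono1)
        finally show ?thesis .
      qed
      have fin1: "finite F1" unfolding F1_def using finJ by simp
      have finsub: "finite {g. g < D \<and> P g}" for P :: "nat \<Rightarrow> bool"
        by (rule finite_subset[of _ "{..<D}"]) auto
      have fin2: "finite F2" unfolding F2_def using finQ finsub by simp
      have fin3: "finite F3" unfolding F3_def using finJ finsub by simp
      have finF: "finite (F1 \<union> F2 \<union> F3)" using fin1 fin2 fin3 by simp
      have "card (F1 \<union> F2 \<union> F3) \<le> card F1 + card F2 + card F3"
        using card_Un_le[of "F1 \<union> F2" F3] card_Un_le[of F1 F2] by linarith
      also have "\<dots> \<le> (k - 1) + (k - 1) * (\<kappa> + 1) + (k - 1) * (\<kappa> + 1)" using c1 c2 c3 by linarith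
      also have "\<dots> = (k - 1) * (2 * \<kappa> + 3)"
      proof -
        have "\<And>x::nat. x + x * (\<kappa> + 1) + x * (\<kappa> + 1) = x * (2 * \<kappa> + 3)" by (simp add: algebra_simps)
        thus ?thesis by blast
      qed
      also have "\<dots> < D" by (rule Dk)
      finally have lt: "card (F1 \<union> F2 \<union> F3) < card {..<D}" by simp
      have "\<not> {..<D} \<subseteq> F1 \<union> F2 \<union> F3"
      proof
        assume sub: "{..<D} \<subseteq> F1 \<union> F2 \<union> F3"
        have "card {..<D} \<le> card (F1 \<union> F2 \<union> F3)" by (rule card_mono[OF finF sub])
        thus False using lt by simp
      qed
      then obtain g where g: "g < D" "g \<notin> F1" "g \<notin> F2" "g \<notin> F3" by auto
      define \<psi> where "\<psi> = \<phi>(n := g)"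
      have core_ok: "(B g (p n) - {p n}) \<inter> p ` {..<k} = {}"
      proof (rule ccontr)
        assume "(B g (p n) - {p n}) \<inter> p ` {..<k} \<noteq> {}"
        then obtain z where z: "z \<in> B g (p n)" "z \<noteq> p n" "z \<in> p ` {..<k}" by auto
        have zQ: "z \<in> Q" unfolding Q_def using z by auto
        have zT: "z < T" using z pts by auto
        have "z \<in> B 0 z" by (rule Bp[OF D0 zT])
        hence "g \<in> insert 0 {g. g < D \<and> g \<noteq> 0 \<and> (B g (p n) - {p n}) \<inter> B 0 z \<noteq> {}}"
          using z g(1) by auto
        hence "g \<in> F2" unfolding F2_def using zQ by blast
        thus False using g by simp
      qed
      have pair_ok: "g \<noteq> \<phi> j \<and> (B g (p n) - {p n}) \<inter> (B (\<phi> j) (p j) - {p j}) = {}" if j: "j < n" "resc p j" for j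
      proof -
        have jJ: "j \<in> J" unfolding J_def using j by simp
        have "g \<noteq> \<phi> j" using g(2) jJ unfolding F1_def by auto
        moreover have "(B g (p n) - {p n}) \<inter> (B (\<phi> j) (p j) - {p j}) = {}"
        proof (rule ccontr)
          assume "(B g (p n) - {p n}) \<inter> (B (\<phi> j) (p j) - {p j}) \<noteq> {}"
          hence "(B g (p n) - {p n}) \<inter> B (\<phi> j) (p j) \<noteq> {}" by auto
          hence "g \<in> F3" unfolding F3_def using jJ g(1) \<open>g \<noteq> \<phi> j\<close> by blast
          thus False using g by simp
        qed
        ultimately show ?thesis by simp
      qed
      have inv1: "\<phi> j < D \<and> (B (\<phi> j) (p j) - {p j}) \<inter> p ` {..<k} = {}" if "j < n" "resc p j" for j
        using inv that unfolding ginv_def by blast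
      have inv2: "\<phi> j \<noteq> \<phi> j' \<and> (B (\<phi> j) (p j) - {p j}) \<inter> (B (\<phi> j') (p j') - {p j'}) = {}"
        if "j < n" "j' < n" "j \<noteq> j'" "resc p j" "resc p j'" for j j'
        using inv that unfolding ginv_def by blast
      have "ginv B D k p (Suc n) \<psi>"
        unfolding ginv_def
      proof (rule conjI; intro allI impI)
        fix j assume j: "j < Suc n" "resc p j"
        show "\<psi> j < D \<and> (B (\<psi> j) (p j) - {p j}) \<inter> p ` {..<k} = {}"
        proof (cases "j = n")
          case True thus ?thesis using g(1) core_ok unfolding \<psi>_def by simp
        next
          case False
          hence jn: "j < n" using j by simp
          show ?thesis using inv1[OF jn j(2)] False unfolding \<psi>_def by simp
        qed
      next
        fix j j' assume j: "j < Suc n" "j' < Suc n" "j \<noteq> j'" "resc p j" "resc p j'"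
        show "\<psi> j \<noteq> \<psi> j' \<and> (B (\<psi> j) (p j) - {p j}) \<inter> (B (\<psi> j') (p j') - {p j'}) = {}"
        proof (cases "j = n")
          case True
          hence j'n: "j' < n" using j by simp
          have pj: "\<psi> j = g" "\<psi> j' = \<phi> j'" using True j'n unfolding \<psi>_def by auto
          show ?thesis unfolding pj using pair_ok[OF j'n j(5)] True by simp
        next
          case False
          show ?thesis
          proof (cases "j' = n")
            case True
            hence jn: "j < n" using j False by simp
            have pj: "\<psi> j' = g" "\<psi> j = \<phi> j" using True jn unfolding \<psi>_def by auto
            have h: "g \<noteq> \<phi> j" "(B g (p n) - {p n}) \<inter> (B (\<phi> j) (p j) - {p j}) = {}"
              using pair_ok[OF jn j(4)] by auto
            show ?thesis unfolding pj using h True by (simp add: Int_commute)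
          next
            case False2: False
            hence jn: "j < n" "j' < n" using j False by auto
            have pj: "\<psi> j = \<phi> j" "\<psi> j' = \<phi> j'" using jn unfolding \<psi>_def by auto
            show ?thesis unfolding pj by (rule inv2[OF jn j(3) j(4) j(5)])
          qed
        qed
      qed
      thus ?thesis by blast
    qed
  qed
  thus ?thesis by simp
qed


definition bix :: "(nat \<Rightarrow> nat \<Rightarrow> nat) \<Rightarrow> nat \<Rightarrow> nat \<Rightarrow> nat \<Rightarrow> nat" where
  "bix a M g b = (b mod M + a g (b div M)) mod M"

definition blk :: "(nat \<Rightarrow> nat \<Rightarrow> nat) \<Rightarrow> nat \<Rightarrow> nat \<Rightarrow> nat \<Rightarrow> nat \<Rightarrow> nat set" where
  "blk a M T g j = {b. b < T \<and> bix a M g b = j}"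

definition Bd :: "(nat \<Rightarrow> nat \<Rightarrow> nat) \<Rightarrow> nat \<Rightarrow> nat \<Rightarrow> nat \<Rightarrow> nat \<Rightarrow> nat set" where
  "Bd a M T g b = blk a M T g (bix a M g b)"

lemma Bd_self: "b < T \<Longrightarrow> b \<in> Bd a M T g b"
  by (simp add: Bd_def blk_def)

lemma kill_from_good:
  fixes a :: "nat \<Rightarrow> nat \<Rightarrow> nat" and D M L r :: nat
  assumes good: "\<forall>f<D. \<forall>j0<M. \<forall>i0<L. \<forall>y0<M. \<forall>G.
            G \<subseteq> {..<D} - {f} \<and> card G = r \<longrightarrow> \<not> (\<forall>g\<in>G. condk M L i0 y0 j0 (a f) (a g))"
    and M0: "0 < M" and f: "f < D" and b: "b < L * M" and b': "b' < L * M"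
  shows "card {g. g < D \<and> g \<noteq> f \<and> (Bd a M (L * M) g b - {b}) \<inter> Bd a M (L * M) f b' \<noteq> {}} \<le> r - 1"
proof (rule ccontr)
  let ?T = "L * M"
  let ?S = "{g. g < D \<and> g \<noteq> f \<and> (Bd a M ?T g b - {b}) \<inter> Bd a M ?T f b' \<noteq> {}}"
  assume "\<not> card ?S \<le> r - 1"
  hence "r \<le> card ?S" by simp
  moreover have "finite ?S" by (rule finite_subset[of _ "{..<D}"]) auto
  ultimately obtain G where G: "G \<subseteq> ?S" "card G = r" by (meson obtain_subset_with_card_n)
  define i0 where "i0 = b div M"
  define y0 where "y0 = b mod M"
  define j0 where "j0 = bix a M f b'"
  have i0L: "i0 < L" unfolding i0_def using b M0 by (simp add: less_mult_imp_div_less)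
  have y0M: "y0 < M" unfolding y0_def using M0 by simp
  have j0M: "j0 < M" unfolding j0_def bix_def using M0 by simp
  have GD: "G \<subseteq> {..<D} - {f}" using G by auto
  have "\<forall>g\<in>G. condk M L i0 y0 j0 (a f) (a g)"
  proof
    fix g assume gG: "g \<in> G"
    hence "(Bd a M ?T g b - {b}) \<inter> Bd a M ?T f b' \<noteq> {}" using G by auto
    then obtain w where w: "w \<in> Bd a M ?T g b" "w \<noteq> b" "w \<in> Bd a M ?T f b'" by auto
    have wT: "w < ?T" and wg: "bix a M g w = bix a M g b" and wf: "bix a M f w = j0"
      using w unfolding Bd_def blk_def j0_def by auto
    define i where "i = w div M"
    define y where "y = w mod M"
    have iL: "i < L" unfolding i_def using wT M0 by (simp add: less_mult_imp_div_less)
    have yM: "y < M" unfolding y_def using M0 by simp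
    have e1: "(y + a g i) mod M = (y0 + a g i0) mod M" using wg unfolding bix_def i_def y_def i0_def y0_def .
    have e2: "(y + a f i) mod M = j0" using wf unfolding bix_def i_def y_def .
    have ii0: "i \<noteq> i0"
    proof
      assume "i = i0"
      hence "(a g i0 + y) mod M = (a g i0 + y0) mod M" using e1 by (simp add: add.commute)
      hence "y = y0" using mod_add_cancel_unique[OF yM y0M] by blast
      hence "w = b" using \<open>i = i0\<close> unfolding i_def y_def i0_def y0_def by (metis div_mult_mod_eq)
      thus False using w by simp
    qed
    show "condk M L i0 y0 j0 (a f) (a g)" unfolding condk_def using iL ii0 yM e1 e2 by blast
  qed
  thus False using good f j0M i0L y0M GD G(2) by blast
qed



lemma bac_from_cores:
  fixes Nb :: "nat \<Rightarrow> nat" and G :: "nat \<Rightarrow> nat \<Rightarrow> nat \<Rightarrow> bit"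
  assumes Nb1: "\<forall>l<m. Nb l \<ge> 1" and NbS: "(\<Sum>l<m. Nb l) = N" and k0: "k > 0"
    and cores: "\<And>idx. (\<forall>j<k. idx j < n) \<Longrightarrow> \<exists>C. (\<forall>j<k. C j \<subseteq> {..<m}) \<and>
        (\<forall>j1<k. \<forall>j2<k. j1 \<noteq> j2 \<longrightarrow> C j1 \<inter> C j2 = {}) \<and>
        (\<forall>j<k. \<exists>(a :: nat \<Rightarrow> nat \<Rightarrow> bit) (lam :: nat \<Rightarrow> bit). \<forall>x :: nat \<Rightarrow> bit.
            x (idx j) = (\<Sum>l\<in>C j. lam l * functional_val Nb a l (bucket_val n G l x)))"
  shows "is_BAC n N k m"
  unfolding is_BAC_def
proof (rule exI[of _ Nb], rule exI[of _ G], intro conjI)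
  show "\<forall>l<m. Nb l \<ge> 1" by (rule Nb1)
  show "(\<Sum>l<m. Nb l) = N" by (rule NbS)
  show "\<forall>idx. (\<forall>j<k. idx j < n) \<longrightarrow> (\<exists>R :: nat \<Rightarrow> nat set. (\<Union>j<k. R j) = {..<m} \<and>
             (\<forall>j1<k. \<forall>j2<k. j1 \<noteq> j2 \<longrightarrow> R j1 \<inter> R j2 = {}) \<and>
             (\<forall>j<k. \<exists>(a :: nat \<Rightarrow> nat \<Rightarrow> bit) (lam :: nat \<Rightarrow> bit).
                \<forall>x :: nat \<Rightarrow> bit.
                  x (idx j) = (\<Sum>l\<in>R j. lam l * functional_val Nb a l (bucket_val n G l x))))"
  proof (intro allI impI)
  fix idx :: "nat \<Rightarrow> nat" assume idx: "\<forall>j<k. idx j < n"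
  obtain C where Csub: "\<forall>j<k. C j \<subseteq> {..<m}" and Cdis: "\<forall>j1<k. \<forall>j2<k. j1 \<noteq> j2 \<longrightarrow> C j1 \<inter> C j2 = {}"
    and Crec: "\<forall>j<k. \<exists>(a :: nat \<Rightarrow> nat \<Rightarrow> bit) (lam :: nat \<Rightarrow> bit). \<forall>x :: nat \<Rightarrow> bit.
            x (idx j) = (\<Sum>l\<in>C j. lam l * functional_val Nb a l (bucket_val n G l x))"
    using cores[OF idx] by blast
  define Rest where "Rest = {..<m} - (\<Union>j<k. C j)"
  define R where "R j = (if j = 0 then C 0 \<union> Rest else C j)" for j
  show "\<exists>R :: nat \<Rightarrow> nat set. (\<Union>j<k. R j) = {..<m} \<and>
             (\<forall>j1<k. \<forall>j2<k. j1 \<noteq> j2 \<longrightarrow> R j1 \<inter> R j2 = {}) \<and>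
             (\<forall>j<k. \<exists>(a :: nat \<Rightarrow> nat \<Rightarrow> bit) (lam :: nat \<Rightarrow> bit).
                \<forall>x :: nat \<Rightarrow> bit.
                  x (idx j) = (\<Sum>l\<in>R j. lam l * functional_val Nb a l (bucket_val n G l x)))"
  proof (rule exI[of _ R], intro conjI allI impI)
    show "(\<Union>j<k. R j) = {..<m}"
    proof
      show "(\<Union>j<k. R j) \<subseteq> {..<m}" using Csub k0 unfolding R_def Rest_def by auto
      show "{..<m} \<subseteq> (\<Union>j<k. R j)"
      proof
        fix l assume l: "l \<in> {..<m}"
        show "l \<in> (\<Union>j<k. R j)"
        proof (cases "l \<in> (\<Union>j<k. C j)")
          case True
          then obtain j where "j < k" "l \<in> C j" by auto
          thus ?thesis unfolding R_def by (cases "j = 0") auto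
        next
          case False
          hence "l \<in> R 0" unfolding R_def Rest_def using l by auto
          thus ?thesis using k0 by auto
        qed
      qed
    qed
  next
    fix j1 j2 assume j: "j1 < k" "j2 < k" "j1 \<noteq> j2"
    show "R j1 \<inter> R j2 = {}"
      using Cdis j unfolding R_def Rest_def by (cases "j1 = 0"; cases "j2 = 0") auto
  next
    fix j assume j: "j < k"
    obtain a lam where rec: "\<forall>x :: nat \<Rightarrow> bit. x (idx j) = (\<Sum>l\<in>C j. lam l * functional_val Nb a l (bucket_val n G l x))"
      using Crec j by blast
    define lam' where "lam' l = (if l \<in> C j then lam l else 0)" for l
    have finC: "finite (C j)" using Csub j finite_subset by blast
    have finRest: "finite Rest" unfolding Rest_def by simp
    show "\<exists>(a :: nat \<Rightarrow> nat \<Rightarrow> bit) (lam :: nat \<Rightarrow> bit). \<forall>x :: nat \<Rightarrow> bit.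
                  x (idx j) = (\<Sum>l\<in>R j. lam l * functional_val Nb a l (bucket_val n G l x))"
    proof (intro exI allI)
      fix x :: "nat \<Rightarrow> bit"
      have "(\<Sum>l\<in>R j. lam' l * functional_val Nb a l (bucket_val n G l x))
            = (\<Sum>l\<in>C j. lam' l * functional_val Nb a l (bucket_val n G l x))"
      proof (cases "j = 0")
        case True
        have dis: "C 0 \<inter> Rest = {}" unfolding Rest_def using k0 by auto
        have "(\<Sum>l\<in>R j. lam' l * functional_val Nb a l (bucket_val n G l x))
            = (\<Sum>l\<in>C 0. lam' l * functional_val Nb a l (bucket_val n G l x)) + (\<Sum>l\<in>Rest. lam' l * functional_val Nb a l (bucket_val n G l x))"
        proof -
          have Rj: "R j = C 0 \<union> Rest" unfolding R_def using True by simp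
          have fin0: "finite (C 0)" using finC True by simp
          show ?thesis unfolding Rj by (rule sum.union_disjoint[OF fin0 finRest dis])
        qed
        also have "(\<Sum>l\<in>Rest. lam' l * functional_val Nb a l (bucket_val n G l x)) = 0"
          using dis True unfolding lam'_def by (intro sum.neutral) auto
        finally have "(\<Sum>l\<in>R j. lam' l * functional_val Nb a l (bucket_val n G l x))
            = (\<Sum>l\<in>C 0. lam' l * functional_val Nb a l (bucket_val n G l x))" by (simp only: add_0_right)
        thus ?thesis using True by (simp only:)
      next
        case False thus ?thesis unfolding R_def by simp
      qed
      also have "\<dots> = (\<Sum>l\<in>C j. lam l * functional_val Nb a l (bucket_val n G l x))"
        unfolding lam'_def by (rule sum.cong) auto
      also have "\<dots> = x (idx j)" using rec[rule_format, of x] by (rule sym)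
      finally show "x (idx j) = (\<Sum>l\<in>R j. lam' l * functional_val Nb a l (bucket_val n G l x))" by (rule sym)
    qed
  qed
  qed
qed



lemma bit_cancel: "(s::bit) + (y + s) = y"
proof -
  have "s + (y + s) = y + (s + s)" by (simp only: ac_simps)
  also have "s + s = 0" by simp
  finally show ?thesis by simp
qed

lemma fsel:
  assumes "c < Nb l"
  shows "functional_val Nb (\<lambda>l' c'. if c' = c then 1 else 0) l v = v c"
proof -
  have "functional_val Nb (\<lambda>l' c'. if c' = c then 1 else 0) l v = (\<Sum>t<Nb l. if t = c then v t else 0)"
    unfolding functional_val_def by (rule sum.cong) auto
  also have "\<dots> = v c" using assms by (subst sum.delta) auto
  finally show ?thesis .
qed

lemma fsel2:
  assumes "sel l < Nb l"
  shows "functional_val Nb (\<lambda>l' c'. if c' = sel l' then 1 else 0) l v = v (sel l)"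
proof -
  have "functional_val Nb (\<lambda>l' c'. if c' = sel l' then 1 else 0) l v = (\<Sum>t<Nb l. if t = sel l then v t else 0)"
    unfolding functional_val_def by (rule sum.cong) auto
  also have "\<dots> = v (sel l)" using assms by (subst sum.delta) auto
  finally show ?thesis .
qed

lemma bv_data:
  assumes "\<And>e. Gm l c e = (if e = c * T + l then 1 else 0)"
  shows "bucket_val n Gm l x c = (if c * T + l < n then x (c * T + l) else 0)"
proof -
  have "bucket_val n Gm l x c = (\<Sum>e<n. if e = c * T + l then x e else 0)"
    unfolding bucket_val_def by (rule sum.cong) (auto simp: assms)
  also have "\<dots> = (if c * T + l < n then x (c * T + l) else 0)" by (subst sum.delta) auto
  finally show ?thesis .
qed

lemma bv_helper:
  fixes T rr :: nat and Bk :: "nat set"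
  assumes Gm: "\<And>e. Gm l c e = (if e div T = rr \<and> e mod T \<in> Bk then 1 else 0)"
    and Bk: "Bk \<subseteq> {..<T}"
  shows "bucket_val n Gm l x c = (\<Sum>w\<in>Bk. if rr * T + w < n then x (rr * T + w) else 0)"
proof -
  have T0: "T > 0" if "Bk \<noteq> {}" using Bk that by auto
  have finBk: "finite Bk" using Bk finite_subset by blast
  define E where "E = {e \<in> {..<n}. e div T = rr \<and> e mod T \<in> Bk}"
  have "bucket_val n Gm l x c = (\<Sum>e<n. if e div T = rr \<and> e mod T \<in> Bk then x e else 0)"
    unfolding bucket_val_def by (rule sum.cong) (auto simp: Gm)
  also have "\<dots> = (\<Sum>e\<in>E. x e)" unfolding E_def by (rule sum.inter_filter[symmetric]) simp
  also have "E = (\<lambda>w. rr * T + w) ` {w \<in> Bk. rr * T + w < n}"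
  proof
    show "E \<subseteq> (\<lambda>w. rr * T + w) ` {w \<in> Bk. rr * T + w < n}"
    proof
      fix e assume e: "e \<in> E"
      hence "e = rr * T + e mod T" unfolding E_def by (metis (mono_tags, lifting) div_mult_mod_eq mem_Collect_eq)
      thus "e \<in> (\<lambda>w. rr * T + w) ` {w \<in> Bk. rr * T + w < n}" using e unfolding E_def
        by (intro image_eqI[of e _ "e mod T"]) auto
    qed
    show "(\<lambda>w. rr * T + w) ` {w \<in> Bk. rr * T + w < n} \<subseteq> E"
    proof
      fix e assume "e \<in> (\<lambda>w. rr * T + w) ` {w \<in> Bk. rr * T + w < n}"
      then obtain w where w: "w \<in> Bk" "rr * T + w < n" "e = rr * T + w" by auto
      have wT: "w < T" using w Bk by auto
      hence "e div T = rr" "e mod T = w" using w by auto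
      thus "e \<in> E" unfolding E_def using w by auto
    qed
  qed
  also have "(\<Sum>e\<in>(\<lambda>w. rr * T + w) ` {w \<in> Bk. rr * T + w < n}. x e) = (\<Sum>w\<in>{w \<in> Bk. rr * T + w < n}. x (rr * T + w))"
    by (subst sum.reindex) (auto simp: inj_on_def)
  also have "\<dots> = (\<Sum>w\<in>Bk. if rr * T + w < n then x (rr * T + w) else 0)"
    by (rule sum.inter_filter[OF finBk])
  finally show ?thesis .
qed


lemma design_BAC:
  fixes a :: "nat \<Rightarrow> nat \<Rightarrow> nat" and n k t L M D S \<kappa> :: nat
  assumes M0: "0 < M" and Tt: "L * M \<le> t" and Dt: "D \<le> t" and nS: "n \<le> L * M * S" and S1: "1 \<le> S"
    and k0: "0 < k" and Dk: "(k - 1) * (2 * \<kappa> + 3) < D"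
    and kill: "\<And>f b b'. f < D \<Longrightarrow> b < L * M \<Longrightarrow> b' < L * M \<Longrightarrow>
        card {g. g < D \<and> g \<noteq> f \<and> (Bd a M (L * M) g b - {b}) \<inter> Bd a M (L * M) f b' \<noteq> {}} \<le> \<kappa>"
  shows "is_BAC n (L * M * S + (t - L * M) + D * (M * S) + (t - D)) k (2 * t)"
proof -
  define T where "T = L * M"
  have Tt': "T \<le> t" and nS': "n \<le> T * S" using Tt nS unfolding T_def by auto
  define Nb where "Nb l = (if l < T then S else if l < t then 1 else if l < t + D then M * S else 1)" for l
  define Gm where "Gm l c e = (if l < T then (if e = c * T + l then 1 else 0) else if l < t then 0
      else if l < t + D then (if e div T = c div M \<and> e mod T \<in> blk a M T (l - t) (c mod M) then 1 else 0) else (0::bit))"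
    for l c e
  define X where "X x c w = (if c * T + w < n then x (c * T + w) else (0::bit))" for x c w
  have Nb1: "\<forall>l<2 * t. Nb l \<ge> 1" unfolding Nb_def using S1 M0 by auto
  have NbS: "(\<Sum>l<2 * t. Nb l) = T * S + (t - T) + D * (M * S) + (t - D)"
  proof -
    have "(\<Sum>l<2 * t. Nb l) = (\<Sum>l\<in>{0..<T}. Nb l) + (\<Sum>l\<in>{T..<t}. Nb l) + (\<Sum>l\<in>{t..<t + D}. Nb l) + (\<Sum>l\<in>{t + D..<2 * t}. Nb l)"
      using Tt' Dt by (simp add: sum.atLeastLessThan_concat atLeast0LessThan[symmetric])
    also have "(\<Sum>l\<in>{0..<T}. Nb l) = T * S" by (simp add: Nb_def)
    also have "(\<Sum>l\<in>{T..<t}. Nb l) = t - T" by (simp add: Nb_def)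
    also have "(\<Sum>l\<in>{t..<t + D}. Nb l) = D * (M * S)" using Tt' by (simp add: Nb_def)
    also have "(\<Sum>l\<in>{t + D..<2 * t}. Nb l) = t - D" using Tt' by (simp add: Nb_def)
    finally show ?thesis .
  qed
  have "is_BAC n (T * S + (t - T) + D * (M * S) + (t - D)) k (2 * t)"
  proof (rule bac_from_cores[where Nb = Nb and G = Gm, OF Nb1 NbS k0])
    fix idx :: "nat \<Rightarrow> nat" assume idx: "\<forall>j<k. idx j < n"
    have n0: "0 < n" using idx k0 by auto
    have T0: "0 < T" using n0 nS' by (cases "T = 0") auto
    define p where "p j = idx j mod T" for j
    define rr where "rr j = idx j div T" for j
    have pT: "p j < T" for j unfolding p_def using T0 by simp
    have rrS: "rr j < S" if "j < k" for j
    proof -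
      have "idx j < T * S" using idx that nS' by (meson less_le_trans)
      thus ?thesis unfolding rr_def by (simp add: div_less_iff_less_mult mult.commute T0)
    qed
    have idxeq: "rr j * T + p j = idx j" for j unfolding rr_def p_def by simp
    obtain \<phi> where inv: "ginv (Bd a M T) D k p k \<phi>"
    proof (rule exE[OF greedy[where B = "Bd a M T" and D = D and T = T and \<kappa> = \<kappa> and k = k and p = p]])
      show "\<And>g b. g < D \<Longrightarrow> b < T \<Longrightarrow> b \<in> Bd a M T g b" by (rule Bd_self)
      show "\<And>f b b'. f < D \<Longrightarrow> b < T \<Longrightarrow> b' < T \<Longrightarrow>
        card {g. g < D \<and> g \<noteq> f \<and> (Bd a M T g b - {b}) \<inter> Bd a M T f b' \<noteq> {}} \<le> \<kappa>"
        unfolding T_def by (rule kill)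
      show "(k - 1) * (2 * \<kappa> + 3) < D" by (rule Dk)
      show "\<And>j. j < k \<Longrightarrow> p j < T" by (rule pT)
    qed
    have inv1: "\<phi> j < D \<and> (Bd a M T (\<phi> j) (p j) - {p j}) \<inter> p ` {..<k} = {}" if "j < k" "resc p j" for j
      using inv that unfolding ginv_def by blast
    have inv2: "\<phi> j \<noteq> \<phi> j' \<and> (Bd a M T (\<phi> j) (p j) - {p j}) \<inter> (Bd a M T (\<phi> j') (p j') - {p j'}) = {}"
      if "j < k" "j' < k" "j \<noteq> j'" "resc p j" "resc p j'" for j j'
      using inv that unfolding ginv_def by blast
    have BdT: "Bd a M T g b \<subseteq> {..<T}" for g b unfolding Bd_def blk_def by auto
    define C where "C j = (if resc p j then (Bd a M T (\<phi> j) (p j) - {p j}) \<union> {t + \<phi> j} else {p j})" for j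
    show "\<exists>C. (\<forall>j<k. C j \<subseteq> {..<2 * t}) \<and>
        (\<forall>j1<k. \<forall>j2<k. j1 \<noteq> j2 \<longrightarrow> C j1 \<inter> C j2 = {}) \<and>
        (\<forall>j<k. \<exists>(a :: nat \<Rightarrow> nat \<Rightarrow> bit) (lam :: nat \<Rightarrow> bit). \<forall>x :: nat \<Rightarrow> bit.
            x (idx j) = (\<Sum>l\<in>C j. lam l * functional_val Nb a l (bucket_val n Gm l x)))"
    proof (rule exI[of _ C], intro conjI allI impI)
      fix j assume j: "j < k"
      show "C j \<subseteq> {..<2 * t}"
      proof (cases "resc p j")
        case True
        have "\<phi> j < D" using inv1[OF j True] by simp
        thus ?thesis unfolding C_def using True BdT[of "\<phi> j" "p j"] Tt' Dt by auto
      next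
        case False thus ?thesis unfolding C_def using pT[of j] Tt' by auto
      qed
    next
      fix j1 j2 assume j: "j1 < k" "j2 < k" "j1 \<noteq> j2"
      show "C j1 \<inter> C j2 = {}"
      proof (cases "resc p j1")
        case R1: True
        show ?thesis
        proof (cases "resc p j2")
          case R2: True
          have h: "\<phi> j1 \<noteq> \<phi> j2" "(Bd a M T (\<phi> j1) (p j1) - {p j1}) \<inter> (Bd a M T (\<phi> j2) (p j2) - {p j2}) = {}"
            using inv2[OF j R1 R2] by auto
          show ?thesis unfolding C_def using R1 R2 h BdT[of "\<phi> j1" "p j1"] BdT[of "\<phi> j2" "p j2"] Tt' by auto
        next
          case R2: False
          have "p j2 \<notin> Bd a M T (\<phi> j1) (p j1) - {p j1}" using inv1[OF j(1) R1] j(2) by auto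
          thus ?thesis unfolding C_def using R1 R2 pT[of j2] Tt' by auto
        qed
      next
        case R1: False
        show ?thesis
        proof (cases "resc p j2")
          case R2: True
          have "p j1 \<notin> Bd a M T (\<phi> j2) (p j2) - {p j2}" using inv1[OF j(2) R2] j(1) by auto
          thus ?thesis unfolding C_def using R1 R2 pT[of j1] Tt' by auto
        next
          case R2: False
          have "p j1 \<noteq> p j2"
          proof (cases "j1 < j2")
            case True thus ?thesis using R2 unfolding resc_def by auto
          next
            case False hence "j2 < j1" using j(3) by simp
            thus ?thesis using R1 unfolding resc_def by metis
          qed
          thus ?thesis unfolding C_def using R1 R2 by auto
        qed
      qed
    next
      fix j assume j: "j < k"
      have Xidx: "X x (rr j) (p j) = x (idx j)" for x unfolding X_def using idxeq[of j] idx j by simp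
      have bvd: "bucket_val n Gm l x c = X x c l" if "l < T" for l x c
        unfolding X_def by (rule bv_data) (simp add: Gm_def that)
      show "\<exists>(a :: nat \<Rightarrow> nat \<Rightarrow> bit) (lam :: nat \<Rightarrow> bit). \<forall>x :: nat \<Rightarrow> bit.
            x (idx j) = (\<Sum>l\<in>C j. lam l * functional_val Nb a l (bucket_val n Gm l x))"
      proof (cases "resc p j")
        case False
        show ?thesis
        proof (intro exI allI)
          fix x :: "nat \<Rightarrow> bit"
          have "(\<Sum>l\<in>C j. 1 * functional_val Nb (\<lambda>l' c'. if c' = rr j then 1 else 0) l (bucket_val n Gm l x))
              = functional_val Nb (\<lambda>l' c'. if c' = rr j then 1 else 0) (p j) (bucket_val n Gm (p j) x)"
            unfolding C_def if_not_P[OF False] by (simp only: sum.insert_if[OF finite.emptyI] empty_iff if_False sum.empty add_0_right mult_1)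
          also have "\<dots> = bucket_val n Gm (p j) x (rr j)"
            by (rule fsel) (simp add: Nb_def pT rrS[OF j])
          also have "\<dots> = x (idx j)" using bvd[OF pT[of j]] Xidx by simp
          finally show "x (idx j) = (\<Sum>l\<in>C j. 1 * functional_val Nb (\<lambda>l' c'. if c' = rr j then 1 else 0) l (bucket_val n Gm l x))"
            by (rule sym)
        qed
      next
        case True
        define g where "g = \<phi> j"
        define b where "b = p j"
        define A where "A = Bd a M T g b"
        define bx where "bx = bix a M g b"
        define sel where "sel l = (if l < T then rr j else rr j * M + bx)" for l
        have gD: "g < D" unfolding g_def using inv1[OF j True] by simp
        have bxM: "bx < M" unfolding bx_def bix_def using M0 by simp
        have AT: "A \<subseteq> {..<T}" unfolding A_def by (rule BdT)
        have finA: "finite A" using AT finite_subset by blast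
        have bA: "b \<in> A" unfolding A_def b_def by (rule Bd_self[OF pT])
        have Cj: "C j = (A - {b}) \<union> {t + g}" unfolding C_def A_def b_def g_def using True by simp
        have tg: "t + g \<notin> A - {b}" using AT Tt' by auto
        show ?thesis
        proof (rule exI[of _ "\<lambda>l' c'. if c' = sel l' then 1 else 0"], rule exI[of _ "\<lambda>_. 1"], rule allI)
          fix x :: "nat \<Rightarrow> bit"
          have dataval: "functional_val Nb (\<lambda>l' c'. if c' = sel l' then 1 else 0) l (bucket_val n Gm l x) = X x (rr j) l"
            if l: "l \<in> A - {b}" for l
          proof -
            have lT: "l < T" using l AT by auto
            have "functional_val Nb (\<lambda>l' c'. if c' = sel l' then 1 else 0) l (bucket_val n Gm l x) = bucket_val n Gm l x (sel l)"
              by (rule fsel2) (simp add: Nb_def sel_def lT rrS[OF j])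
            also have "\<dots> = X x (rr j) l" using bvd[OF lT] lT unfolding sel_def by simp
            finally show ?thesis .
          qed
          have helpval: "functional_val Nb (\<lambda>l' c'. if c' = sel l' then 1 else 0) (t + g) (bucket_val n Gm (t + g) x)
              = (\<Sum>w\<in>A. X x (rr j) w)"
          proof -
            have ntT: "\<not> t + g < T" using Tt' by simp
            have selh: "sel (t + g) = rr j * M + bx" unfolding sel_def using ntT by simp
            have lt: "rr j * M + bx < M * S"
            proof -
              have "rr j + 1 \<le> S" using rrS[OF j] by simp
              hence "(rr j + 1) * M \<le> S * M" by (rule mult_le_mono1)
              thus ?thesis using bxM by (simp add: algebra_simps)
            qed
            have "functional_val Nb (\<lambda>l' c'. if c' = sel l' then 1 else 0) (t + g) (bucket_val n Gm (t + g) x)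
                = bucket_val n Gm (t + g) x (rr j * M + bx)"
              unfolding selh[symmetric] by (rule fsel2) (simp add: Nb_def selh ntT gD lt)
            also have "\<dots> = (\<Sum>w\<in>A. if rr j * T + w < n then x (rr j * T + w) else 0)"
            proof (rule bv_helper)
              have dm: "(rr j * M + bx) div M = rr j" "(rr j * M + bx) mod M = bx" using bxM M0 by auto
              show "\<And>e. Gm (t + g) (rr j * M + bx) e = (if e div T = rr j \<and> e mod T \<in> A then 1 else 0)"
                unfolding Gm_def using ntT gD dm by (simp add: A_def Bd_def bx_def)
              show "A \<subseteq> {..<T}" by (rule AT)
            qed
            also have "\<dots> = (\<Sum>w\<in>A. X x (rr j) w)" unfolding X_def by simp
            finally show ?thesis .
          qed
          have "(\<Sum>l\<in>C j. 1 * functional_val Nb (\<lambda>l' c'. if c' = sel l' then 1 else 0) l (bucket_val n Gm l x))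
              = (\<Sum>l\<in>A - {b}. 1 * functional_val Nb (\<lambda>l' c'. if c' = sel l' then 1 else 0) l (bucket_val n Gm l x))
                + 1 * functional_val Nb (\<lambda>l' c'. if c' = sel l' then 1 else 0) (t + g) (bucket_val n Gm (t + g) x)"
            unfolding Cj using finA tg by (subst sum.union_disjoint) auto
          also have "(\<Sum>l\<in>A - {b}. 1 * functional_val Nb (\<lambda>l' c'. if c' = sel l' then 1 else 0) l (bucket_val n Gm l x))
              = (\<Sum>l\<in>A - {b}. X x (rr j) l)" by (rule sum.cong) (simp_all only: dataval mult_1)
          also have "1 * functional_val Nb (\<lambda>l' c'. if c' = sel l' then 1 else 0) (t + g) (bucket_val n Gm (t + g) x)
              = X x (rr j) b + (\<Sum>l\<in>A - {b}. X x (rr j) l)"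
            unfolding mult_1 helpval by (rule sum.remove[OF finA bA])
          also have "(\<Sum>l\<in>A - {b}. X x (rr j) l) + (X x (rr j) b + (\<Sum>l\<in>A - {b}. X x (rr j) l)) = X x (rr j) b"
            by (rule bit_cancel)
          also have "X x (rr j) b = x (idx j)" unfolding b_def by (rule Xidx)
          finally show "x (idx j) = (\<Sum>l\<in>C j. 1 * functional_val Nb (\<lambda>l' c'. if c' = sel l' then 1 else 0) l (bucket_val n Gm l x))"
            by (rule sym)
        qed
      qed
    qed
  qed
  thus ?thesis unfolding T_def .
qed



lemma pow_le_exp_fact: "real r ^ r \<le> exp (real r) * fact r"
proof -
  have "real r ^ r / fact r \<le> exp (real r)"
  proof -
    have s: "summable (\<lambda>n. real r ^ n / fact n)"
      using summable_exp[of "real r"] by (simp add: divide_inverse mult.commute)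
    have "(\<Sum>n\<in>{r}. real r ^ n / fact n) \<le> (\<Sum>n. real r ^ n / fact n)"
      by (rule sum_le_suminf[OF s]) auto
    also have "(\<Sum>n. real r ^ n / fact n) = exp (real r)"
      using exp_converges[of "real r"] by (simp add: sums_iff divide_inverse mult.commute)
    finally show ?thesis by simp
  qed
  thus ?thesis by (simp add: divide_le_eq mult.commute)
qed

lemma e3_le: "3 * exp (3::real) \<le> 64"
proof -
  have "exp (3::real) = exp 1 ^ 3" by (metis exp_of_nat_mult numeral_eq_Suc of_nat_numeral mult.right_neutral)
  also have "\<dots> \<le> (272/100) ^ 3" by (rule power_mono) (use e_less_272 in auto)
  finally have "exp (3::real) \<le> (272/100) ^ 3" .
  thus ?thesis by (simp add: power3_eq_cube)
qed

lemma count_ineq: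
  fixes k L r D M :: nat
  assumes r: "r \<ge> 1" and L: "L \<ge> 1" and k: "k \<ge> 1" and D: "D = 3 * k * r" and M: "M = 64 * k * L"
    and small: "real (D * M * L * M) < exp (2 * real r)"
  shows "D * M * L * M * (D choose r) * (L - 1) ^ r < M ^ r"
proof -
  define E where "E = exp (1::real)"
  have E0: "E > 0" unfolding E_def by simp
  have Cf: "real (D choose r) * fact r \<le> real D ^ r"
    using binomial_fact_pow[of D r] by (metis of_nat_fact of_nat_le_iff of_nat_mult of_nat_power)
  have rf: "real r ^ r \<le> E ^ r * fact r" using pow_le_exp_fact[of r] unfolding E_def by (simp add: exp_of_nat_mult[symmetric] mult.commute)
  have rpos: "real r ^ r > 0" using r by simp
  have C: "real (D choose r) \<le> (3 * real k * E) ^ r"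
  proof -
    have "real (D choose r) * real r ^ r \<le> real (D choose r) * (E ^ r * fact r)"
      by (rule mult_left_mono[OF rf]) simp
    also have "\<dots> = E ^ r * (real (D choose r) * fact r)" by simp
    also have "\<dots> \<le> E ^ r * real D ^ r" by (rule mult_left_mono[OF Cf]) (simp add: E0 less_imp_le)
    also have "\<dots> = (3 * real k * E) ^ r * real r ^ r" unfolding D by (simp add: power_mult_distrib)
    finally show ?thesis using rpos by simp
  qed
  have L1: "real (L - 1) \<le> real L" by simp
  have "real (D * M * L * M * (D choose r) * (L - 1) ^ r)
      = real (D * M * L * M) * real (D choose r) * real (L - 1) ^ r" by simp
  also have "\<dots> \<le> real (D * M * L * M) * (3 * real k * E) ^ r * real L ^ r"
    by (intro mult_mono C power_mono L1) (auto simp: E0 less_imp_le)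
  also have "\<dots> = real (D * M * L * M) * (3 * real k * E * real L) ^ r" by (simp add: power_mult_distrib)
  also have "\<dots> < exp (2 * real r) * (3 * real k * E * real L) ^ r"
    using small k L E0 by (intro mult_strict_right_mono) auto
  also have "exp (2 * real r) = (E * E) ^ r"
  proof -
    have "exp (2 * real r) = exp 2 ^ r" by (metis exp_of_nat_mult mult.commute)
    moreover have "exp (2::real) = E * E" unfolding E_def by (simp add: mult_exp_exp)
    ultimately show ?thesis by simp
  qed
  also have "(E * E) ^ r * (3 * real k * E * real L) ^ r = ((3 * exp 3) * real k * real L) ^ r"
  proof -
    have "E * E * (3 * real k * E * real L) = (3 * exp 3) * real k * real L"
    proof -
      have "exp (3::real) = E * E * E" unfolding E_def by (simp add: mult_exp_exp)
      thus ?thesis by (simp add: algebra_simps)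
    qed
    thus ?thesis by (metis power_mult_distrib)
  qed
  also have "\<dots> \<le> (64 * real k * real L) ^ r"
    by (intro power_mono mult_right_mono e3_le) auto
  also have "\<dots> = real (M ^ r)" unfolding M by simp
  finally show ?thesis by linarith
qed


lemma ln_ge_10: assumes "(30000::real) \<le> Q" shows "10 \<le> ln Q"
proof -
  have "exp (10::real) = exp 1 ^ 10" by (metis exp_of_nat_mult mult.right_neutral of_nat_numeral)
  also have "\<dots> \<le> (272/100) ^ 10" by (rule power_mono) (use e_less_272 in auto)
  also have "\<dots> \<le> 30000" by (simp add: power_divide)
  finally have "exp 10 \<le> Q" using assms by simp
  hence "ln (exp 10) \<le> ln Q" using assms by (subst ln_le_cancel_iff) auto
  thus ?thesis by simp
qed

lemma ln_le_2sqrt: assumes "0 < Q" shows "ln Q \<le> 2 * sqrt Q"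
proof -
  have "ln Q = 2 * ln (sqrt Q)" using assms by (simp add: ln_sqrt)
  also have "\<dots> \<le> 2 * (sqrt Q - 1)" using ln_le_minus_one[of "sqrt Q"] assms by simp
  finally show ?thesis by simp
qed



lemma main_core:
  fixes q k s :: nat
  assumes q: "q \<ge> 30000" and k: "k > 0" and s: "s > 0"
    and H: "real (k * s) * sqrt (real (k * s)) * 64 * ln (real q) < sqrt (real q)"
  shows "\<exists>N. is_BAC (q^2) N k (2 * nat \<lceil>real q / real s\<rceil>) \<and>
     real N \<le> real (q^2) + 128 * (real (k * s) * sqrt (real (k * s))) * (real q * sqrt (real q)) * ln (real q)"
proof -
  define Q where "Q = real q"
  define K where "K = real (k * s)"
  have Q30: "30000 \<le> Q" unfolding Q_def using q by simp
  have Q0: "0 < Q" using Q30 by simp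
  have lnQ: "10 \<le> ln Q" by (rule ln_ge_10[OF Q30])
  have ks1: "1 \<le> k * s" using k s by (simp add: Suc_le_eq)
  have K1: "1 \<le> K" unfolding K_def using ks1 by (metis of_nat_1 of_nat_le_iff)
  have sK1: "1 \<le> sqrt K" using K1 by simp
  have sQ0: "0 < sqrt Q" using Q0 by simp
  have kK: "real k \<le> K" unfolding K_def of_nat_le_iff using s by simp
  have H': "K * sqrt K * 64 * ln Q < sqrt Q" using H unfolding K_def Q_def .
  have sQbig: "640 * K * sqrt K < sqrt Q"
  proof -
    have "640 * K * sqrt K \<le> K * sqrt K * 64 * ln Q"
      using lnQ K1 sK1 by (simp add: mult.commute mult.left_commute)
    thus ?thesis using H' by linarith
  qed
  have sQK: "640 * K \<le> sqrt Q" using sQbig K1 sK1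
    by (smt (verit) mult_le_cancel_left1)
  have QK: "6400 * K \<le> Q"
  proof -
    have "(640 * K) * (640 * K) \<le> sqrt Q * sqrt Q" using sQK K1 Q0 by (intro mult_mono) auto
    hence "409600 * (K * K) \<le> Q" using Q0 by simp
    moreover have "K \<le> K * K" using K1 by simp
    ultimately have "409600 * K \<le> Q" by linarith
    thus ?thesis using K1 by linarith
  qed
  define t where "t = nat \<lceil>Q / real s\<rceil>"
  have s1: "1 \<le> real s" using s by simp
  have Qs0: "0 < Q / real s" using Q0 s by simp
  have t_ge: "Q / real s \<le> real t" unfolding t_def using Qs0 by linarith
  have t_le: "real t \<le> Q"
  proof -
    have "Q / real s \<le> Q" using Q0 s1 by (simp add: divide_le_eq)
    hence "\<lceil>Q / real s\<rceil> \<le> q" unfolding Q_def by (simp add: ceiling_le_iff)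
    thus ?thesis unfolding t_def Q_def by linarith
  qed
  have k1: "1 \<le> real k" using k by simp
  have Qts: "Q \<le> real t * real s" using t_ge s1 by (simp add: divide_le_eq)
  have tK: "Q / K \<le> real t / real k"
  proof -
    have "Q * real k \<le> real t * real s * real k" by (rule mult_right_mono[OF Qts]) simp
    also have "real t * real s * real k = real t * K" unfolding K_def by (simp add: ac_simps)
    finally have "Q * real k \<le> real t * K" .
    thus ?thesis using K1 k1 by (simp add: divide_le_eq le_divide_eq mult.commute)
  qed
  define x where "x = real t / real (64 * k)"
  have x_ge: "Q / (64 * K) \<le> x"
  proof -
    have "Q / (64 * K) = (Q / K) / 64" by simp
    also have "\<dots> \<le> (real t / real k) / 64" by (rule divide_right_mono[OF tK]) simp
    also have "\<dots> = x" unfolding x_def by simp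
    finally show ?thesis .
  qed
  have x100: "100 \<le> x"
  proof -
    have "100 \<le> Q / (64 * K)" using QK K1 by (simp add: le_divide_eq)
    thus ?thesis using x_ge by linarith
  qed
  have sx10: "10 \<le> sqrt x" using x100 real_sqrt_le_mono[of 100 x] by simp
  have sx_ge: "sqrt Q / (8 * sqrt K) \<le> sqrt x"
  proof -
    have "sqrt (Q / (64 * K)) = sqrt Q / (8 * sqrt K)" using K1 by (simp add: real_sqrt_divide real_sqrt_mult)
    moreover have "sqrt (Q / (64 * K)) \<le> sqrt x" using x_ge by simp
    ultimately show ?thesis by simp
  qed
  define L where "L = nat \<lfloor>sqrt x\<rfloor>"
  have L_le: "real L \<le> sqrt x" unfolding L_def using sx10 by linarith
  have L_gt: "sqrt x < real L + 1" unfolding L_def using sx10 by linarith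
  have L09: "9 / 10 * sqrt x \<le> real L" using L_gt sx10 by linarith
  have L1: "L \<ge> 1" using L09 sx10 by linarith
  define M where "M = 64 * k * L"
  have LM_t: "L * M \<le> t"
  proof -
    have "real L * real L \<le> sqrt x * sqrt x" using L_le x100 by (intro mult_mono) auto
    also have "\<dots> = x" using x100 by simp
    finally have "real L * real L \<le> real t / real (64 * k)" unfolding x_def .
    hence "real L * real L * real (64 * k) \<le> real t" using k1 by (simp add: le_divide_eq)
    moreover have "L * M = L * L * (64 * k)" unfolding M_def by (simp add: ac_simps)
    ultimately have "real (L * M) \<le> real t" by (metis of_nat_mult)
    thus ?thesis by (simp only: of_nat_le_iff)
  qed
  have M1: "M \<ge> 1" unfolding M_def using L1 k by simp
  have M_t: "M \<le> t" using LM_t L1 by (metis le_trans mult_le_mono1 mult_1)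
  define r where "r = nat \<lceil>2 * ln Q\<rceil>"
  have r_ge: "2 * ln Q \<le> real r" unfolding r_def using lnQ by linarith
  have r_le: "real r \<le> 2 * ln Q + 1" unfolding r_def using lnQ by linarith
  have r1: "r \<ge> 1" using r_ge lnQ by linarith
  define D where "D = 3 * k * r"
  have D_le: "real D \<le> 7 * real k * ln Q"
  proof -
    have "real D = 3 * real k * real r" unfolding D_def by simp
    also have "\<dots> \<le> 3 * real k * (2 * ln Q + 1)" using r_le k1 by (intro mult_left_mono) auto
    also have "\<dots> \<le> 7 * real k * ln Q"
    proof -
      have a: "3 * real k * (2 * ln Q + 1) = 6 * (real k * ln Q) + 3 * real k" by (simp add: algebra_simps)
      have b: "3 * real k \<le> real k * ln Q" using mult_left_mono[of 3 "ln Q" "real k"] lnQ k1 by simp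
      have c: "7 * real k * ln Q = 7 * (real k * ln Q)" by simp
      show ?thesis unfolding a c using b by linarith
    qed
    finally show ?thesis .
  qed
  have D_t: "D \<le> t"
  proof -
    have "real D * real s \<le> 7 * real k * ln Q * real s" by (rule mult_right_mono[OF D_le]) simp
    also have "7 * real k * ln Q * real s = 7 * K * ln Q" unfolding K_def by (simp add: ac_simps)
    also have "\<dots> \<le> 7 * K * (2 * sqrt Q)" using ln_le_2sqrt[OF Q0] K1 by (intro mult_left_mono) auto
    also have "\<dots> = (14 * K) * sqrt Q" by simp
    also have "\<dots> \<le> sqrt Q * sqrt Q" using sQK K1 Q0 by (intro mult_right_mono) auto
    also have "\<dots> = Q" using Q0 by simp
    finally have "real D \<le> Q / real s" using s1 by (simp add: le_divide_eq)
    hence "real D \<le> real t" using t_ge by linarith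
    thus ?thesis by (simp only: of_nat_le_iff)
  qed
  define n where "n = q ^ 2"
  have nQ: "real n = Q * Q" unfolding n_def Q_def by (simp add: power2_eq_square)
  have LM1: "1 \<le> L * M" using L1 M1 by (metis le_trans mult_le_mono1 mult_1)
  have LM0: "0 < real (L * M)" using LM1 by simp
  define S where "S = nat \<lceil>real n / real (L * M)\<rceil>"
  have n0: "0 < real n" using nQ Q0 by simp
  have y0: "0 < real n / real (L * M)" using n0 LM0 by simp
  have S_ge: "real n / real (L * M) \<le> real S" unfolding S_def using y0 by linarith
  have S_lt: "real S < real n / real (L * M) + 1" unfolding S_def using y0 by linarith
  have S1: "1 \<le> S"
  proof -
    have "0 < real S" using S_ge y0 by linarith
    thus ?thesis by simp
  qed
  have nS: "n \<le> L * M * S"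
  proof -
    have "real n \<le> real (L * M) * real S" using S_ge LM0 by (simp add: divide_le_eq mult.commute)
    thus ?thesis by (metis of_nat_le_iff of_nat_mult)
  qed
  have Dt3: "real (D * M * L * M) \<le> Q * Q * Q"
  proof -
    have "D * M * L * M = D * M * (L * M)" by (simp add: ac_simps)
    also have "\<dots> \<le> t * t * t" using D_t M_t LM_t by (intro mult_le_mono) auto
    finally have "real (D * M * L * M) \<le> real t * real t * real t" by (metis of_nat_le_iff of_nat_mult)
    also have "\<dots> \<le> Q * Q * Q" using t_le by (intro mult_mono) auto
    finally show ?thesis .
  qed
  have small: "real (D * M * L * M) < exp (2 * real r)"
  proof -
    have "Q * Q * Q < Q * Q * Q * Q" using Q30 by simp
    also have "Q * Q * Q * Q = exp (4 * ln Q)"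
    proof -
      have "exp (4 * ln Q) = exp (ln Q) ^ 4" by (metis exp_of_nat_mult of_nat_numeral)
      thus ?thesis using Q0 by (simp add: power4_eq_xxxx)
    qed
    also have "\<dots> \<le> exp (2 * real r)" using r_ge by simp
    finally show ?thesis using Dt3 by linarith
  qed
  have hyp: "D * M * L * M * (D choose r) * (L - 1) ^ r < M ^ r"
    by (rule count_ineq[OF r1 L1 _ D_def M_def small]) (use k in simp)
  obtain a where good: "\<forall>f<D. \<forall>j0<M. \<forall>i0<L. \<forall>y0<M. \<forall>G.
            G \<subseteq> {..<D} - {f} \<and> card G = r \<longrightarrow> \<not> (\<forall>g\<in>G. condk M L i0 y0 j0 (a f) (a g))"
    using exists_good[OF hyp r1] by blast
  have M0: "0 < M" using M1 by simp
  have kill: "\<And>f b b'. f < D \<Longrightarrow> b < L * M \<Longrightarrow> b' < L * M \<Longrightarrow>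
        card {g. g < D \<and> g \<noteq> f \<and> (Bd a M (L * M) g b - {b}) \<inter> Bd a M (L * M) f b' \<noteq> {}} \<le> r - 1"
    by (rule kill_from_good[OF good M0])
  have Dk: "(k - 1) * (2 * (r - 1) + 3) < D"
  proof -
    have "2 * (r - 1) + 3 \<le> 3 * r" using r1 by simp
    hence "(k - 1) * (2 * (r - 1) + 3) \<le> (k - 1) * (3 * r)" by (rule mult_le_mono2)
    also have "\<dots> < k * (3 * r)" using k r1 by simp
    finally show ?thesis unfolding D_def by (simp add: ac_simps)
  qed
  have BAC: "is_BAC n (L * M * S + (t - L * M) + D * (M * S) + (t - D)) k (2 * t)"
    by (rule design_BAC[OF M0 LM_t D_t nS S1 k Dk kill])
  define N where "N = L * M * S + (t - L * M) + D * (M * S) + (t - D)"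
  define X where "X = K * sqrt K * (Q * sqrt Q) * ln Q"
  define sa where "sa = sqrt Q"
  define sb where "sb = sqrt K"
  have sa1: "1 \<le> sa" unfolding sa_def using Q30 by simp
  have sb1: "1 \<le> sb" unfolding sb_def using K1 by simp
  have Qa: "Q = sa * sa" unfolding sa_def using Q0 by simp
  have Kb: "K = sb * sb" unfolding sb_def using K1 by simp
  have X_eq: "X = sb * sb * sb * (sa * sa * sa) * ln Q" unfolding X_def sa_def[symmetric] sb_def[symmetric] Qa Kb using sa1 sb1 by simp
  have N1: "real N \<le> real (L * M * S) + real t + real (D * (M * S)) + real t"
  proof -
    have "N \<le> L * M * S + t + D * (M * S) + t" unfolding N_def by simp
    thus ?thesis by (metis of_nat_add of_nat_le_iff)
  qed
  have A1: "real (L * M * S) \<le> real n + real t"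
  proof -
    have "real (L * M) * real S \<le> real (L * M) * (real n / real (L * M) + 1)"
      using S_lt LM0 by (intro mult_left_mono) auto
    also have "\<dots> = real n + real (L * M)"
    proof -
      have gen: "\<And>c y::real. c > 0 \<Longrightarrow> c * (y / c + 1) = y + c" by (simp add: field_simps)
      show ?thesis by (rule gen[OF LM0])
    qed
    also have "\<dots> \<le> real n + real t" using LM_t by (simp only: add_left_mono of_nat_le_iff)
    finally show ?thesis by simp
  qed
  have L0: "0 < real L" using L1 by simp
  have A2: "real (D * (M * S)) \<le> real D * (real n / real L) + real D * real t"
  proof -
    have "real M * real S \<le> real M * (real n / real (L * M) + 1)"
      using S_lt by (intro mult_left_mono) auto
    also have "\<dots> = real n / real L + real M" using M0 L0 by (simp add: field_simps)
    also have "\<dots> \<le> real n / real L + real t" using M_t by simp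
    finally have "real D * (real M * real S) \<le> real D * (real n / real L + real t)" by (intro mult_left_mono) auto
    thus ?thesis by (simp only: of_nat_mult distrib_left)
  qed
  have Lb: "(9/80) * sa / sb \<le> real L"
  proof -
    have "(9/80) * sa / sb = 9/10 * (sqrt Q / (8 * sqrt K))" unfolding sa_def sb_def by simp
    also have "\<dots> \<le> 9/10 * sqrt x" using sx_ge by simp
    also have "\<dots> \<le> real L" by (rule L09)
    finally show ?thesis .
  qed
  have D63: "real D \<le> (63/10) * K * ln Q"
  proof -
    have "real D = 3 * real k * real r" unfolding D_def by simp
    also have "\<dots> \<le> 3 * real k * ((21/10) * ln Q)" using r_le lnQ k1 by (intro mult_left_mono) auto
    also have "\<dots> = (63/10) * (real k * ln Q)" by simp
    also have "\<dots> \<le> (63/10) * (K * ln Q)" using kK lnQ by (intro mult_left_mono mult_right_mono) auto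
    finally show ?thesis by simp
  qed
  have X0: "0 \<le> X" unfolding X_eq using sa1 sb1 lnQ by simp
  have A3: "real D * (real n / real L) \<le> 56 * X"
  proof -
    have "real D * real n \<le> (63/10) * K * ln Q * real n" using D63 n0 by (intro mult_right_mono) auto
    also have "\<dots> = 56 * X * ((9/80) * sa / sb)"
    proof -
      have X2: "X = K * Q * ln Q * (sa * sb)" unfolding X_def sa_def sb_def by (simp add: ac_simps)
      have sb0: "sb \<noteq> 0" using sb1 by simp
      have "56 * X * ((9/80) * sa / sb) = (63/10) * K * ln Q * (Q * (sa * sa)) * (sb / sb)"
        unfolding X2 by (simp add: ac_simps)
      also have "\<dots> = (63/10) * K * ln Q * (Q * Q)" using sb0 Qa by simp
      finally show ?thesis unfolding nQ by simp
    qed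
    also have "\<dots> \<le> 56 * X * real L" using Lb X0 by (intro mult_left_mono) auto
    finally show ?thesis using L0 by (simp add: divide_le_eq)
  qed
  have A4: "3 * real t + real D * real t \<le> 10 * X"
  proof -
    have "3 * real t + real D * real t \<le> 3 * Q + (63/10) * K * ln Q * Q"
      using t_le D63 by (intro add_mono mult_mono) auto
    also have "\<dots> \<le> 10 * (K * ln Q * Q)"
    proof -
      have "10 \<le> K * ln Q" using mult_mono[of 1 K 10 "ln Q"] K1 lnQ by simp
      hence "10 * Q \<le> K * ln Q * Q" using Q0 by (intro mult_right_mono) auto
      moreover have "63 / 10 * K * ln Q * Q = 63 / 10 * (K * ln Q * Q)" by simp
      ultimately show ?thesis using Q0 by linarith
    qed
    also have "K * ln Q * Q \<le> X"
    proof -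
      have ab: "1 \<le> sb * sa" using mult_mono[of 1 sb 1 sa] sa1 sb1 by simp
      have p: "0 \<le> K * ln Q * Q" using K1 lnQ Q0 Q30 by (intro mult_nonneg_nonneg) auto
      have "K * ln Q * Q * 1 \<le> K * ln Q * Q * (sb * sa)" by (rule mult_left_mono[OF ab p])
      also have "\<dots> = X" unfolding X_eq Qa Kb by (simp add: algebra_simps)
      finally show ?thesis by simp
    qed
    finally show ?thesis by simp
  qed
  have Nb: "real N \<le> real n + 128 * X"
    using N1 A1 A2 A3 A4 X0 by linarith
  show ?thesis
  proof (intro exI conjI)
    show "is_BAC (q^2) N k (2 * nat \<lceil>real q / real s\<rceil>)" using BAC unfolding N_def n_def t_def Q_def .
    show "real N \<le> real (q^2) + 128 * (real (k * s) * sqrt (real (k * s))) * (real q * sqrt (real q)) * ln (real q)"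
      using Nb unfolding X_def n_def K_def Q_def by (simp add: mult.assoc)
  qed
qed



lemma powr_3half: "0 < (x::real) \<Longrightarrow> x powr (3/2) = x * sqrt x"
proof -
  assume x: "0 < x"
  have "x powr (3/2) = x powr (1 + 1/2)" by simp
  also have "\<dots> = x powr 1 * x powr (1/2)" by (rule powr_add)
  also have "\<dots> = x * sqrt x" using x by (simp add: powr_half_sqrt)
  finally show ?thesis .
qed

lemma sq_powr: "0 < (x::real) \<Longrightarrow> (x ^ 2) powr a = x powr (2 * a)"
proof -
  assume x: "0 < x"
  have "x powr (2::real) = x ^ 2" using x by (metis of_nat_numeral powr_realpow)
  hence "(x ^ 2) powr a = (x powr 2) powr a" by simp
  also have "\<dots> = x powr (2 * a)" by (simp add: powr_powr)
  finally show ?thesis .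
qed

theorem theorem4p11:
  shows "\<exists>q0::nat. \<forall>q::nat. primepow q \<and> q \<ge> q0 \<longrightarrow>
    (\<forall>n k s :: nat. n = q^2 \<longrightarrow> k > 0 \<longrightarrow> s > 0 \<longrightarrow>
       real (k * s) powr (3/2) < real n powr (1/4) / (32 * ln (real n)) \<longrightarrow>
       (\<exists>N. is_BAC n N k (2 * nat \<lceil>sqrt (real n) / real s\<rceil>) \<and>
            real N \<le> real n + 64 * real (k * s) powr (3/2) * real n powr (3/4) * ln (real n)))"
proof (rule exI[of _ 30000], intro allI impI)
  fix q n k s :: nat
  assume qq: "primepow q \<and> q \<ge> 30000" and n: "n = q^2" and k: "k > 0" and s: "s > 0"
    and H: "real (k * s) powr (3/2) < real n powr (1/4) / (32 * ln (real n))"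
  define Q where "Q = real q"
  define K where "K = real (k * s)"
  have Q30: "30000 \<le> Q" unfolding Q_def using qq by simp
  have Q0: "0 < Q" using Q30 by simp
  have lnQ: "10 \<le> ln Q" by (rule ln_ge_10[OF Q30])
  have K0: "0 < K" unfolding K_def using k s by simp
  have rn: "real n = Q ^ 2" unfolding n Q_def by simp
  have sqn: "sqrt (real n) = Q" unfolding rn using Q0 by simp
  have n14: "real n powr (1/4) = sqrt Q" unfolding rn using Q0 by (simp add: sq_powr powr_half_sqrt)
  have n34: "real n powr (3/4) = Q * sqrt Q" unfolding rn using Q0 by (simp add: sq_powr powr_3half)
  have lnn: "ln (real n) = 2 * ln Q" unfolding rn using Q0 by (simp add: ln_realpow)
  have K32: "real (k * s) powr (3/2) = K * sqrt K" unfolding K_def[symmetric] using K0 by (rule powr_3half)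
  have H2: "K * sqrt K < sqrt Q / (64 * ln Q)" using H unfolding K32 n14 lnn by simp
  have H3: "real (k * s) * sqrt (real (k * s)) * 64 * ln (real q) < sqrt (real q)"
  proof -
    have "K * sqrt K * (64 * ln Q) < sqrt Q" using H2 lnQ by (simp add: less_divide_eq)
    thus ?thesis unfolding K_def Q_def by (simp add: ac_simps)
  qed
  obtain N where NB: "is_BAC (q^2) N k (2 * nat \<lceil>real q / real s\<rceil>)"
    and Nle: "real N \<le> real (q^2) + 128 * (real (k * s) * sqrt (real (k * s))) * (real q * sqrt (real q)) * ln (real q)"
    using main_core[OF _ k s H3] qq by blast
  show "\<exists>N. is_BAC n N k (2 * nat \<lceil>sqrt (real n) / real s\<rceil>) \<and>
            real N \<le> real n + 64 * real (k * s) powr (3/2) * real n powr (3/4) * ln (real n)"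
  proof (intro exI conjI)
    have e: "sqrt (real n) = real q" using sqn unfolding Q_def .
    show "is_BAC n N k (2 * nat \<lceil>sqrt (real n) / real s\<rceil>)" unfolding e using NB unfolding n .
    have eq: "64 * real (k * s) powr (3/2) * real n powr (3/4) * ln (real n)
        = 128 * (real (k * s) * sqrt (real (k * s))) * (real q * sqrt (real q)) * ln (real q)"
      unfolding K32 n34 lnn unfolding K_def Q_def by simp
    have rq: "real n = real (q^2)" unfolding n ..
    show "real N \<le> real n + 64 * real (k * s) powr (3/2) * real n powr (3/4) * ln (real n)"
      unfolding eq unfolding rq by (rule Nle)
  qed
qed


end
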